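(* Let $d\ge 2$, let $\mathcal{V}\subset\mathbb{R}^d$ be a finite vertex set in general position, and let $\tau$ be the Delaunay mesh of $\mathcal{V}$. Let $Q=\{v_1,\ldots,v_m\}\subset\mathcal{V}$ with $m\ge d$ (in the application, $Q$ consists of interface vertices of a mesh interface $\Gamma_\tau$) such that the closed ball bounded by the minimum covering sphere of $Q$ contains no vertex of $\mathcal{V}$ other than $v_1,\ldots,v_m$. Then for any two vertices $p_1,p_2\in\mathcal{V}\setminus Q$: if the segment $\overline{p_1p_2}$ intersects $\operatorname{conv}(Q)$, then $\overline{p_1p_2}$ is not an edge of the Delaunay mesh $\tau$.
   Context: A mesh of $\Omega=\operatorname{conv}(\mathcal{V})$ is a partition of $\Omega$ into nondegenerate $d$-simplices with vertices in $\mathcal{V}$; an edge of a simplex is the segment between two of its vertices. The Delaunay mesh $\tau(\mathcal{V})$ is the (unique, under general position) mesh such that the circumsphere of each cell contains no vertex of $\mathcal{V}$ in its interior other than the cell's own vertices. The minimum covering sphere of a non-empty finite set $Q$ is the smallest sphere such that every point of $Q$ lies inside it or on it. A finite point set in $\mathbb{R}^d$ is in general position if for each $i=1,\ldots,d$ no $i+1$ of its points lie in an affine subspace of dimension $i-1$, and no $d+2$ of its points lie on a common sphere. A mesh interface $\Gamma_\tau$ is a $(d-1)$-dimensional mesh formed by $(d-1)$-dimensional facets of cells of $\tau$ forming a surface in $\mathbb{R}^d$; its vertices are called interface vertices. *)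

theory Defs
  imports "HOL-Analysis.Analysis"
begin

definition general_position :: "'a::euclidean_space set \<Rightarrow> bool" where
  "general_position V \<longleftrightarrow>
     (\<forall>i\<in>{1..DIM('a)}. \<forall>S\<subseteq>V. card S = i + 1 \<longrightarrow> \<not> aff_dim S \<le> int i - 1) \<and>
     (\<forall>S\<subseteq>V. card S = DIM('a) + 2 \<longrightarrow> \<not> (\<exists>c r. \<forall>x\<in>S. dist c x = r))"

definition nondeg_simplex :: "'a::euclidean_space set \<Rightarrow> bool" where
  "nondeg_simplex T \<longleftrightarrow> card T = DIM('a) + 1 \<and> \<not> affine_dependent T"

definition is_mesh :: "'a::euclidean_space set \<Rightarrow> 'a set set \<Rightarrow> bool" where
  "is_mesh V \<tau> \<longleftrightarrow> finite \<tau> \<and>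
     (\<forall>T\<in>\<tau>. T \<subseteq> V \<and> nondeg_simplex T) \<and>
     (\<Union>T\<in>\<tau>. convex hull T) = convex hull V \<and>
     (\<forall>T1\<in>\<tau>. \<forall>T2\<in>\<tau>. T1 \<noteq> T2 \<longrightarrow>
        interior (convex hull T1) \<inter> interior (convex hull T2) = {})"

definition delaunay_mesh :: "'a::euclidean_space set \<Rightarrow> 'a set set \<Rightarrow> bool" where
  "delaunay_mesh V \<tau> \<longleftrightarrow> is_mesh V \<tau> \<and>
     (\<forall>T\<in>\<tau>. \<exists>c r. (\<forall>x\<in>T. dist c x = r) \<and>
                    (\<forall>v\<in>V - T. \<not> dist c v < r))"

definition is_edge :: "'a set set \<Rightarrow> 'a \<Rightarrow> 'a \<Rightarrow> bool" where
  "is_edge \<tau> p1 p2 \<longleftrightarrow> p1 \<noteq> p2 \<and> (\<exists>T\<in>\<tau>. p1 \<in> T \<and> p2 \<in> T)"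

definition min_covering_ball :: "'a::metric_space set \<Rightarrow> 'a \<Rightarrow> real \<Rightarrow> bool" where
  "min_covering_ball Q c r \<longleftrightarrow> Q \<subseteq> cball c r \<and>
     (\<forall>c' r'. Q \<subseteq> cball c' r' \<longrightarrow> r \<le> r')"

end

theory Submission
  imports Defs
begin

theorem mainTheorem2:
  fixes V Q :: "'a::euclidean_space set" and \<tau> :: "'a set set"
    and c p1 p2 :: 'a and r :: real
  assumes "DIM('a) \<ge> 2"
    and "finite V"
    and "general_position V"
    and "delaunay_mesh V \<tau>"
    and "Q \<subseteq> V" and "card Q \<ge> DIM('a)"
    and "min_covering_ball Q c r"
    and "V \<inter> cball c r \<subseteq> Q"
    and "p1 \<in> V - Q" and "p2 \<in> V - Q"
    and "closed_segment p1 p2 \<inter> convex hull Q \<noteq> {}"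
  shows "\<not> is_edge \<tau> p1 p2"
proof
  assume "is_edge \<tau> p1 p2"
  then obtain T where T: "T \<in> \<tau>" "p1 \<in> T" "p2 \<in> T" unfolding is_edge_def by blast
  then obtain c' r' where sph: "\<forall>x\<in>T. dist c' x = r'" and emp: "\<forall>v\<in>V - T. \<not> dist c' v < r'"
    using assms(4) unfolding delaunay_mesh_def by blast
  have r'0: "r' \<ge> 0" using sph T(2) by force
  define a where "a = c' - c"
  define K where "K = c \<bullet> c - c' \<bullet> c' - r^2 + r'^2"
  have key: "(dist y c)^2 - r^2 - ((dist y c')^2 - r'^2) = 2*(a \<bullet> y) + K" for y
    by (simp add: dist_norm power2_norm_eq_inner inner_diff_left inner_diff_right a_def K_def
        inner_commute algebra_simps)
  have Qin: "Q \<subseteq> {y. a \<bullet> y \<le> - K/2}"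
  proof
    fix q assume q: "q \<in> Q"
    have "dist q c \<le> r" using q assms(7) unfolding min_covering_ball_def by (auto simp: dist_commute)
    hence 1: "(dist q c)^2 \<le> r^2" by (simp add: power_mono)
    have "dist c' q \<ge> r'"
    proof (cases "q \<in> T")
      case True thus ?thesis using sph by auto
    next
      case False thus ?thesis using emp q assms(5) by force
    qed
    hence 2: "(dist q c')^2 \<ge> r'^2" using r'0 by (simp add: power_mono dist_commute)
    show "q \<in> {y. a \<bullet> y \<le> - K/2}" using key[of q] 1 2 by simp
  qed
  have Pin: "p \<in> {y. a \<bullet> y > - K/2}" if p: "p \<in> T" "p \<in> V - Q" for p
  proof -
    have "p \<notin> cball c r" using p assms(8) by blast
    hence "dist p c > r" by (simp add: dist_commute)
    moreover have "r \<ge> 0"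
    proof -
      obtain x where "x \<in> convex hull Q" using assms(11) by blast
      hence "Q \<noteq> {}" by auto
      then obtain q where "q \<in> Q" by blast
      thus ?thesis using assms(7) unfolding min_covering_ball_def
        by (meson mem_cball dual_order.trans subsetD zero_le_dist)
    qed
    ultimately have 1: "(dist p c)^2 > r^2" by (simp add: power_strict_mono)
    have 2: "(dist p c')^2 = r'^2" using sph p by (metis dist_commute)
    show ?thesis using key[of p] 1 2 by simp
  qed
  have "convex hull Q \<subseteq> {y. a \<bullet> y \<le> - K/2}"
    using Qin convex_halfspace_le by (rule hull_minimal)
  moreover have "closed_segment p1 p2 \<subseteq> {y. a \<bullet> y > - K/2}"
    by (rule closed_segment_subset) (use Pin T assms(9,10) convex_halfspace_gt in auto)
  ultimately show False using assms(11) by fastforce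
qed

end
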